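(* Every $f\in\mathcal C^\infty(\mathbb R^{\mathbb N})$ is locally cylindrical: for every $x\in\mathbb R^{\mathbb N}$ there exist an open neighbourhood $U$ of $x$, a finite set $N_0\subset\mathbb N$ and a continuous function $g$ on $\pi_{N_0}(U)$ such that $f|_U=g\circ\pi_{N_0}|_U$, where $\pi_{N_0}:\mathbb R^{\mathbb N}\to\mathbb R^{N_0}$ is the coordinate projection.
   Context: $\mathbb R^{\mathbb N}$ is the space of real sequences with the product topology. It carries the canonical $\mathcal C^\infty$ structure of a product: its structure curves are the maps $c:\mathbb R\to\mathbb R^{\mathbb N}$ all of whose components $c_n:\mathbb R\to\mathbb R$ are smooth, and $\mathcal C^\infty(\mathbb R^{\mathbb N})$ is the set of functions $f:\mathbb R^{\mathbb N}\to\mathbb R$ such that $f\circ c\in C^\infty(\mathbb R,\mathbb R)$ for every structure curve $c$. *)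

theory Defs
  imports "HOL-Analysis.Analysis"
begin

text \<open>R^N is modelled as the type nat \<Rightarrow> real, whose topology (HOL-Analysis,
Function_Topology) is the product topology.\<close>

definition smooth_real :: "(real \<Rightarrow> real) \<Rightarrow> bool" where
  "smooth_real h \<longleftrightarrow> (\<exists>D :: nat \<Rightarrow> real \<Rightarrow> real. D 0 = h \<and>
      (\<forall>n t. (D n has_real_derivative D (Suc n) t) (at t)))"

definition structure_curve :: "(real \<Rightarrow> (nat \<Rightarrow> real)) \<Rightarrow> bool" where
  "structure_curve c \<longleftrightarrow> (\<forall>n. smooth_real (\<lambda>t. c t n))"

definition Cinf_RN :: "((nat \<Rightarrow> real) \<Rightarrow> real) set" where
  "Cinf_RN = {f. \<forall>c. structure_curve c \<longrightarrow> smooth_real (f \<circ> c)}"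

text \<open>Coordinate projection onto R^{N0}; R^{N0} is identified with the functions
vanishing outside N0 (with the subspace product topology, i.e. the Euclidean one).\<close>
definition cyl_proj :: "nat set \<Rightarrow> (nat \<Rightarrow> real) \<Rightarrow> (nat \<Rightarrow> real)" where
  "cyl_proj N0 y = (\<lambda>i. if i \<in> N0 then y i else 0)"

end

theory Submission
  imports Defs "HOL-Computational_Algebra.Polynomial"
begin


fun Ck :: "nat \<Rightarrow> (real \<Rightarrow> real) \<Rightarrow> bool" where
  "Ck 0 f = True"
| "Ck (Suc n) f = (\<exists>f'. (\<forall>t. (f has_real_derivative f' t) (at t)) \<and> Ck n f')"

lemma Ck_const: "Ck n (\<lambda>t. c)"
proof (induction n arbitrary: c)
  case (Suc n) then show ?case by (auto intro!: exI[of _ "\<lambda>t. 0"])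
qed simp

lemma Ck_add: "Ck n f \<Longrightarrow> Ck n g \<Longrightarrow> Ck n (\<lambda>t. f t + g t)"
proof (induction n arbitrary: f g)
  case (Suc n)
  then obtain f' g' where "\<forall>t. (f has_real_derivative f' t) (at t)" "Ck n f'"
     "\<forall>t. (g has_real_derivative g' t) (at t)" "Ck n g'" by auto
  then show ?case using Suc.IH
    by (auto intro!: exI[of _ "\<lambda>t. f' t + g' t"] derivative_intros)
qed simp

lemma Ck_Suc_mono: "Ck (Suc n) f \<Longrightarrow> Ck n f"
proof (induction n arbitrary: f)
  case (Suc n)
  then obtain f' where "\<forall>t. (f has_real_derivative f' t) (at t)" "Ck (Suc n) f'" by auto
  then show ?case using Suc.IH by auto
qed simp

lemma Ck_mult: "Ck n f \<Longrightarrow> Ck n g \<Longrightarrow> Ck n (\<lambda>t. f t * g t)"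
proof (induction n arbitrary: f g)
  case (Suc n)
  then obtain f' g' where d: "\<forall>t. (f has_real_derivative f' t) (at t)" "Ck n f'"
     "\<forall>t. (g has_real_derivative g' t) (at t)" "Ck n g'" by auto
  have "Ck n f" "Ck n g" using Suc.prems Ck_Suc_mono by blast+
  have "Ck n (\<lambda>t. f t * g' t + f' t * g t)"
    using Suc.IH d \<open>Ck n f\<close> \<open>Ck n g\<close> by (intro Ck_add) auto
  moreover have "\<forall>t. ((\<lambda>t. f t * g t) has_real_derivative f t * g' t + f' t * g t) (at t)"
    using d by (auto intro!: derivative_eq_intros)
  ultimately show ?case by auto
qed simp

lemma Ck_inverse: "Ck n g \<Longrightarrow> (\<forall>t. g t \<noteq> 0) \<Longrightarrow> Ck n (\<lambda>t. inverse (g t))"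
proof (induction n arbitrary: g)
  case (Suc n)
  then obtain g' where d: "\<forall>t. (g has_real_derivative g' t) (at t)" "Ck n g'" by auto
  have "Ck n g" using Suc.prems Ck_Suc_mono by blast
  then have i: "Ck n (\<lambda>t. inverse (g t))" using Suc by auto
  have "Ck n (\<lambda>t. g' t * (- 1) * inverse (g t) * inverse (g t))"
    using d i by (intro Ck_mult Ck_const) auto
  moreover have "\<forall>t. ((\<lambda>t. inverse (g t)) has_real_derivative g' t * (- 1) * inverse (g t) * inverse (g t)) (at t)"
    using d Suc.prems by (auto intro!: derivative_eq_intros simp: field_simps power2_eq_square)
  ultimately show ?case by auto
qed simp

lemma Ck_affine: "Ck n f \<Longrightarrow> Ck n (\<lambda>t. f (a * t + b))"
proof (induction n arbitrary: f)
  case (Suc n)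
  then obtain f' where d: "\<forall>t. (f has_real_derivative f' t) (at t)" "Ck n f'" by auto
  have "Ck n (\<lambda>t. f' (a * t + b) * a)" using Suc.IH d by (intro Ck_mult Ck_const) auto
  moreover have "\<forall>t. ((\<lambda>t. f (a * t + b)) has_real_derivative f' (a * t + b) * a) (at t)"
    using d by (auto intro!: derivative_eq_intros DERIV_chain2[where f=f])
  ultimately show ?case by auto
qed simp



definition Ef :: "real poly \<Rightarrow> real \<Rightarrow> real" where
  "Ef p t = (if t > 0 then poly p (1/t) * exp (- (1/t)) else 0)"

definition Qp :: "real poly \<Rightarrow> real poly" where
  "Qp p = [:0,0,1:] * (p - pderiv p)"

lemma poly_exp_lim: "((\<lambda>u::real. poly r u * exp (- u)) \<longlongrightarrow> 0) at_top"
proof -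
  have "((\<lambda>u. \<Sum>i\<le>degree r. coeff r i * (u ^ i / exp u)) \<longlongrightarrow> (\<Sum>i\<le>degree r. coeff r i * 0)) at_top"
    by (intro tendsto_sum tendsto_mult tendsto_const tendsto_power_div_exp_0)
  moreover have "(\<Sum>i\<le>degree r. coeff r i * (u ^ i / exp u)) = poly r u * exp (- u)" for u
    by (simp add: poly_altdef sum_distrib_right exp_minus divide_inverse mult.assoc)
  ultimately show ?thesis by simp
qed

lemma poly_exp_lim0: "((\<lambda>h. poly r (1/h) * exp (- (1/h))) \<longlongrightarrow> 0) (at_right (0::real))"
proof -
  have "filterlim (\<lambda>h::real. 1/h) at_top (at_right 0)"
    using filterlim_inverse_at_top_right by (simp add: inverse_eq_divide)
  from filterlim_compose[OF poly_exp_lim this] show ?thesis by simp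
qed

lemma Ef_deriv: "(Ef p has_real_derivative Ef (Qp p) t) (at t)"
proof -
  consider "t > 0" | "t < 0" | "t = 0" by linarith
  then show ?thesis
  proof cases
    case 1
    have h1: "((\<lambda>t. 1/t) has_real_derivative -1/t^2) (at t)" 
      using 1 by (auto intro!: derivative_eq_intros simp: power2_eq_square)
    have h2: "((\<lambda>t. poly p (1/t)) has_real_derivative poly (pderiv p) (1/t) * (-1/t^2)) (at t)"
      by (rule DERIV_chain2[OF poly_DERIV h1])
    have h1': "((\<lambda>t. - (1/t)) has_real_derivative 1/t^2) (at t)" 
      using DERIV_minus[OF h1] by simp
    have h3: "((\<lambda>t. exp (- (1/t))) has_real_derivative exp (- (1/t)) * (1/t^2)) (at t)"
      by (rule DERIV_chain2[OF DERIV_exp h1'])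
    have eq: "poly (pderiv p) (1/t) * (-1/t^2) * exp (- (1/t)) + exp (- (1/t)) * (1/t^2) * poly p (1/t) = Ef (Qp p) t"
      using 1 by (simp add: Ef_def Qp_def poly_mult algebra_simps power2_eq_square divide_inverse)
    from DERIV_mult[OF h2 h3] have "((\<lambda>t. poly p (1/t) * exp (- (1/t))) has_real_derivative Ef (Qp p) t) (at t)"
      by (simp only: eq)
    then show ?thesis
      by (rule has_field_derivative_transform_within_open[where S="{0<..}"]) (auto simp: Ef_def 1)
  next
    case 2
    have "Ef (Qp p) t = 0" using 2 by (simp add: Ef_def)
    moreover have "((\<lambda>t. 0) has_real_derivative 0) (at t)" by simp
    ultimately have "((\<lambda>t. 0) has_real_derivative Ef (Qp p) t) (at t)" by simp
    then show ?thesis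
      by (rule has_field_derivative_transform_within_open[where S="{..<0}"]) (auto simp: Ef_def 2)
  next
    case 3
    have "((\<lambda>y. (Ef p y - Ef p 0) / (y - 0)) \<longlongrightarrow> 0) (at 0)"
    proof (rule filterlim_split_at)
      have A: "0 = (Ef p y - Ef p 0) / (y - 0)" if "y < 0" for y using that by (simp add: Ef_def)
      have "eventually (\<lambda>y. y \<in> {-1<..<0}) (at_left (0::real))" by (rule eventually_at_left_real) simp
      then have "eventually (\<lambda>y. 0 = (Ef p y - Ef p 0) / (y - 0)) (at_left (0::real))"
        by (rule eventually_mono) (rule A, simp)
      then show "((\<lambda>y. (Ef p y - Ef p 0) / (y - 0)) \<longlongrightarrow> 0) (at_left 0)"
        by (rule Lim_transform_eventually[OF tendsto_const])
      have B: "poly ([:0,1:] * p) (1/y) * exp (- (1/y)) = (Ef p y - Ef p 0) / (y - 0)" if "y > 0" for y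
        using that by (simp add: Ef_def)
      have "eventually (\<lambda>y. poly ([:0,1:] * p) (1/y) * exp (- (1/y)) = (Ef p y - Ef p 0) / (y - 0)) (at_right (0::real))"
        by (rule eventually_mono[OF eventually_at_right_less]) (rule B)
      then show "((\<lambda>y. (Ef p y - Ef p 0) / (y - 0)) \<longlongrightarrow> 0) (at_right 0)"
        by (rule Lim_transform_eventually[OF poly_exp_lim0])
    qed
    then show ?thesis using 3 by (simp add: has_field_derivative_iff Ef_def)
  qed
qed

lemma Ck_Ef: "Ck n (Ef p)"
proof (induction n arbitrary: p)
  case (Suc n) then show ?case using Ef_deriv by auto
qed simp

definition ee :: "real \<Rightarrow> real" where "ee t = Ef 1 t"

lemma ee_simp: "ee t = (if t > 0 then exp (- (1/t)) else 0)" by (simp add: ee_def Ef_def)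

definition phi :: "real \<Rightarrow> real" where "phi t = ee t * inverse (ee t + ee (1 - t))"

lemma ee_den: "ee t + ee (1 - t) > 0"
proof (cases "t > 0")
  case True
  then show ?thesis by (simp add: ee_simp add_pos_nonneg)
next
  case False
  then show ?thesis by (simp add: ee_simp)
qed

lemma Ck_phi: "Ck n phi"
proof -
  have a: "Ck n ee" unfolding ee_def by (rule Ck_Ef)
  have b: "Ck n (\<lambda>t. ee ((-1) * t + 1))" by (rule Ck_affine[OF a])
  have nz: "\<forall>t. ee t + ee ((-1) * t + 1) \<noteq> 0"
    using ee_den by (metis add.commute less_irrefl minus_mult_commute mult_1 uminus_add_conv_diff)
  have "Ck n (\<lambda>t. ee t * inverse (ee t + ee ((-1) * t + 1)))"
    using a b nz by (intro Ck_mult Ck_inverse Ck_add) auto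
  then show ?thesis unfolding phi_def by simp
qed

lemma phi_le0: "t \<le> 0 \<Longrightarrow> phi t = 0" by (simp add: phi_def ee_simp)
lemma phi_ge1: "t \<ge> 1 \<Longrightarrow> phi t = 1" using ee_den[of t] by (simp add: phi_def ee_simp)



lemma Ck_all_deriv:
  assumes "\<forall>n. Ck n f"
  shows "(\<forall>n. Ck n (deriv f)) \<and> (\<forall>t. (f has_real_derivative deriv f t) (at t))"
proof -
  from assms[rule_format, of "Suc 0"] obtain f' where f': "\<forall>t. (f has_real_derivative f' t) (at t)" by auto
  have df: "deriv f = f'" using f' by (auto intro!: ext DERIV_imp_deriv)
  have "Ck n (deriv f)" for n
  proof -
    from assms[rule_format, of "Suc n"] obtain g where g: "\<forall>t. (f has_real_derivative g t) (at t)" "Ck n g" by auto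
    have "g = f'" using g f' by (auto intro!: ext DERIV_unique)
    then show ?thesis using g df by simp
  qed
  then show ?thesis using f' df by simp
qed

definition Dphi :: "nat \<Rightarrow> real \<Rightarrow> real" where "Dphi k = (deriv ^^ k) phi"

lemma Dphi_props: "(\<forall>n. Ck n (Dphi k)) \<and> (\<forall>t. (Dphi k has_real_derivative Dphi (Suc k) t) (at t))"
proof (induction k)
  case 0
  have "\<forall>n. Ck n (Dphi 0)" using Ck_phi by (simp add: Dphi_def)
  with Ck_all_deriv[OF this] show ?case by (simp add: Dphi_def)
next
  case (Suc k)
  then have "\<forall>n. Ck n (Dphi (Suc k))" using Ck_all_deriv by (simp add: Dphi_def)
  with Ck_all_deriv[OF this] show ?case by (simp add: Dphi_def)
qed

lemma Dphi_0: "Dphi 0 = phi" by (simp add: Dphi_def)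

lemma Dphi_deriv: "(Dphi k has_real_derivative Dphi (Suc k) t) (at t)"
  using Dphi_props by blast

lemma deriv_zero_on_const:
  assumes "\<forall>t. (g has_real_derivative g' t) (at t)" "open S" "\<forall>t\<in>S. g t = c" "t \<in> S"
  shows "g' t = 0"
proof -
  have "((\<lambda>_. c) has_real_derivative 0) (at t)" by simp
  then have "(g has_real_derivative 0) (at t)"
    by (rule has_field_derivative_transform_within_open[OF _ assms(2,4)]) (use assms(3) in auto)
  then show ?thesis using assms(1) DERIV_unique by blast
qed

lemma Dphi_neg: "t < 0 \<Longrightarrow> Dphi k t = 0"
proof (induction k arbitrary: t)
  case 0
  then show ?case by (simp add: Dphi_0 phi_le0)
next
  case (Suc k)
  show ?case
    by (rule deriv_zero_on_const[where S="{..<0}" and c=0 and g="Dphi k"])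
       (use Suc Dphi_deriv in auto)
qed

lemma Dphi_gt1: "t > 1 \<Longrightarrow> Dphi (Suc k) t = 0"
proof (induction k arbitrary: t)
  case 0
  have "\<forall>t. (Dphi 0 has_real_derivative Dphi (Suc 0) t) (at t)" using Dphi_deriv by blast
  moreover have "\<forall>t\<in>{1<..}. Dphi 0 t = 1" by (simp add: Dphi_0 phi_ge1)
  ultimately show ?case using deriv_zero_on_const[of "Dphi 0" "Dphi (Suc 0)" "{1<..}" 1 t] 0 by simp
next
  case (Suc k)
  show ?case
    by (rule deriv_zero_on_const[where S="{1<..}" and c=0 and g="Dphi (Suc k)"])
       (use Suc Dphi_deriv in auto)
qed

lemma Dphi_bounded: "\<exists>M. \<forall>t. \<bar>Dphi k t\<bar> \<le> M"
proof -
  have "continuous_on {0..1} (Dphi k)"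
    using Dphi_deriv by (intro continuous_at_imp_continuous_on) (auto intro: DERIV_isCont)
  then have "bounded (Dphi k ` {0..1})" by (intro compact_imp_bounded compact_continuous_image) auto
  then obtain a where a: "\<forall>x\<in>Dphi k ` {0..1}. norm x \<le> a" by (auto simp: bounded_iff)
  have "\<bar>Dphi k t\<bar> \<le> max a 1" for t
  proof -
    consider "t < 0" | "t \<in> {0..1}" | "t > 1" by force
    then show ?thesis
    proof cases
      case 3
      then show ?thesis
        by (cases k) (auto simp: Dphi_0 phi_ge1 Dphi_gt1)
    next
      case 2
      then have "\<bar>Dphi k t\<bar> \<le> a" using a by (metis image_eqI real_norm_def)
      then show ?thesis by (simp add: le_max_iff_disj)
    qed (use Dphi_neg in auto)
  qed
  then show ?thesis by blast
qed

lemma phi_smooth: "\<exists>M. \<forall>k t. \<bar>Dphi k t\<bar> \<le> M k"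
  using Dphi_bounded by metis



lemma series_smooth:
  fixes b s l :: "nat \<Rightarrow> real"
  assumes lpos: "\<forall>n. 0 < l n" and sb: "\<forall>k. summable (\<lambda>n. \<bar>b n\<bar> / l n ^ k)"
  shows "smooth_real (\<lambda>t. \<Sum>n. b n * phi ((t - s n) / l n))"
proof -
  obtain M where M: "\<forall>k t. \<bar>Dphi k t\<bar> \<le> M k" using phi_smooth by blast
  define H where "H k t = (\<Sum>n. b n / l n ^ k * Dphi k ((t - s n) / l n))" for k t
  have H0: "H 0 = (\<lambda>t. \<Sum>n. b n * phi ((t - s n) / l n))"
    by (simp add: H_def Dphi_0 fun_eq_iff)
  have HD: "(H k has_real_derivative H (Suc k) t) (at t)" for k t
  proof -
    define f where "f n t = b n / l n ^ k * Dphi k ((t - s n) / l n)" for n t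
    define f' where "f' n t = b n / l n ^ Suc k * Dphi (Suc k) ((t - s n) / l n)" for n t
    have d: "(f n has_field_derivative f' n x) (at x within UNIV)" for n x
    proof -
      have "((\<lambda>t. (t - s n) / l n) has_real_derivative 1 / l n) (at x)"
        using lpos[rule_format, of n] by (auto intro!: derivative_eq_intros)
      from DERIV_chain2[OF Dphi_deriv this]
      have "((\<lambda>t. Dphi k ((t - s n) / l n)) has_real_derivative Dphi (Suc k) ((x - s n) / l n) * (1 / l n)) (at x)" .
      from DERIV_cmult[OF this, of "b n / l n ^ k"]
      have "((\<lambda>t. b n / l n ^ k * Dphi k ((t - s n) / l n)) has_real_derivative
          b n / l n ^ k * (Dphi (Suc k) ((x - s n) / l n) * (1 / l n))) (at x)" .
      moreover have "f n = (\<lambda>t. b n / l n ^ k * Dphi k ((t - s n) / l n))" by (rule ext) (simp add: f_def)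
      moreover have "f' n x = b n / l n ^ k * (Dphi (Suc k) ((x - s n) / l n) * (1 / l n))"
        by (simp add: f'_def)
      ultimately show ?thesis by simp
    qed
    have Ms: "summable (\<lambda>n. \<bar>b n\<bar> / l n ^ j * M j)" for j
      using sb by (intro summable_mult2) auto
    have fb: "norm (f' n x) \<le> \<bar>b n\<bar> / l n ^ Suc k * M (Suc k)" for n x
    proof -
      have "norm (f' n x) = \<bar>b n\<bar> / l n ^ Suc k * \<bar>Dphi (Suc k) ((x - s n) / l n)\<bar>"
        using lpos[rule_format, of n] by (simp add: f'_def abs_mult)
      also have "\<dots> \<le> \<bar>b n\<bar> / l n ^ Suc k * M (Suc k)"
        using lpos[rule_format, of n] M by (intro mult_left_mono) auto
      finally show ?thesis .
    qed
    have uc: "uniformly_convergent_on UNIV (\<lambda>n x. \<Sum>i<n. f' i x)"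
      by (rule Weierstrass_m_test'[OF fb Ms])
    have fb0: "norm (f n 0) \<le> \<bar>b n\<bar> / l n ^ k * M k" for n
    proof -
      have "norm (f n 0) = \<bar>b n\<bar> / l n ^ k * \<bar>Dphi k ((0 - s n) / l n)\<bar>"
        using lpos[rule_format, of n] by (simp add: f_def abs_mult)
      also have "\<dots> \<le> \<bar>b n\<bar> / l n ^ k * M k"
        using lpos[rule_format, of n] M by (intro mult_left_mono) auto
      finally show ?thesis .
    qed
    have s0: "summable (\<lambda>n. f n 0)"
      by (rule summable_comparison_test'[OF Ms fb0])
    have "((\<lambda>x. \<Sum>n. f n x) has_field_derivative (\<Sum>n. f' n t)) (at t)"
      using has_field_derivative_series'(2)[OF convex_UNIV d uc _ s0, of t] by simp
    moreover have "H k = (\<lambda>x. \<Sum>n. f n x)" by (simp add: H_def f_def fun_eq_iff)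
    moreover have "H (Suc k) t = (\<Sum>n. f' n t)" by (simp add: H_def f'_def)
    ultimately show ?thesis by simp
  qed
  show ?thesis unfolding smooth_real_def
    by (rule exI[of _ H]) (use H0 HD in auto)
qed



lemma smooth_add_const:
  assumes "smooth_real g" shows "smooth_real (\<lambda>t. c + g t)"
proof -
  from assms obtain D where D: "D 0 = g" "\<forall>n t. (D n has_real_derivative D (Suc n) t) (at t)"
    unfolding smooth_real_def by blast
  define D' where "D' k = (if k = 0 then (\<lambda>t. c + D 0 t) else D k)" for k
  have "(D' n has_real_derivative D' (Suc n) t) (at t)" for n t
  proof (cases n)
    case 0
    then show ?thesis using D(2) by (auto simp: D'_def intro!: derivative_eq_intros)
  next
    case (Suc m)
    then show ?thesis using D(2) by (simp add: D'_def)
  qed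
  moreover have "D' 0 = (\<lambda>t. c + g t)" using D(1) by (simp add: D'_def)
  ultimately show ?thesis unfolding smooth_real_def by blast
qed

lemma curve_exists:
  fixes a :: "nat \<Rightarrow> nat \<Rightarrow> real" and L :: "nat \<Rightarrow> real" and l :: "nat \<Rightarrow> real"
  assumes lpos: "\<forall>m. 0 < l m" and l1: "\<forall>m. l m \<le> 1" and lsum: "summable l"
    and conv: "\<forall>i. (\<lambda>m. a m i) \<longlonglongrightarrow> L i"
    and fast: "\<forall>i. \<exists>N. \<forall>m\<ge>N. \<bar>a m i - a (Suc m) i\<bar> \<le> l m ^ m * (1/2)^m"
  shows "\<exists>c. structure_curve c \<and> c 0 = L \<and> (\<forall>m. c (\<Sum>j. l (j + m)) = a m)"
proof -
  define S where "S m = (\<Sum>j. l (j + m))" for m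
  have sm: "summable (\<lambda>j. l (j + m))" for m using lsum by (rule summable_ignore_initial_segment)
  have S_rec: "S m = l m + S (Suc m)" for m
    using suminf_split_head[OF sm[of m]] by (simp add: S_def)
  have S_pos: "S m > 0" for m
    unfolding S_def using sm lpos by (intro suminf_pos) auto
  have S_mono: "S n \<le> S m" if "m \<le> n" for m n
    using that
  proof (induction n rule: dec_induct)
    case (step n)
    then show ?case using S_rec[of n] lpos[rule_format, of n] by linarith
  qed simp
  define c where "c t i = L i + (\<Sum>n. (a n i - a (Suc n) i) * phi ((t - S (Suc n)) / l n))" for t i
  have sc: "structure_curve c"
    unfolding structure_curve_def
  proof
    fix i
    obtain N where N: "\<forall>m\<ge>N. \<bar>a m i - a (Suc m) i\<bar> \<le> l m ^ m * (1/2)^m" using fast by blast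
    have "summable (\<lambda>n. \<bar>a n i - a (Suc n) i\<bar> / l n ^ k)" for k
    proof (rule summable_comparison_test'[OF summable_geometric[of "1/2::real"]])
      fix n assume n: "n \<ge> max N k"
      have ln: "0 < l n" "l n \<le> 1" using lpos l1 by auto
      have "\<bar>a n i - a (Suc n) i\<bar> / l n ^ k \<le> l n ^ n * (1/2)^n / l n ^ k"
        using N n ln by (intro divide_right_mono) auto
      also have "l n ^ n = l n ^ (n - k) * l n ^ k"
        using n by (simp add: power_add[symmetric])
      also have "l n ^ (n - k) * l n ^ k * (1/2)^n / l n ^ k = l n ^ (n - k) * (1/2)^n"
        using ln by simp
      also have "\<dots> \<le> 1 * (1/2)^n"
        using ln by (intro mult_right_mono power_le_one) auto
      finally show "norm (\<bar>a n i - a (Suc n) i\<bar> / l n ^ k) \<le> (1/2::real)^n" using ln by simp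
    qed simp
    then have "smooth_real (\<lambda>t. \<Sum>n. (a n i - a (Suc n) i) * phi ((t - S (Suc n)) / l n))"
      using lpos by (intro series_smooth) auto
    from smooth_add_const[OF this, of "L i"]
    show "smooth_real (\<lambda>t. c t i)" by (simp add: c_def)
  qed
  have c0: "c 0 = L"
  proof
    fix i
    have "phi ((0 - S (Suc n)) / l n) = 0" for n
      using S_pos[of "Suc n"] lpos[rule_format, of n] by (intro phi_le0) (simp add: divide_nonpos_pos)
    then show "c 0 i = L i" by (simp add: c_def)
  qed
  have cS: "c (S m) = a m" for m
  proof
    fix i
    have ph: "(a n i - a (Suc n) i) * phi ((S m - S (Suc n)) / l n) = (if m \<le> n then a n i - a (Suc n) i else 0)" for n
    proof (cases "m \<le> n")
      case True
      then have "S n \<le> S m" by (rule S_mono)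
      then have "(S m - S (Suc n)) / l n \<ge> 1"
        using S_rec[of n] lpos[rule_format, of n] by simp
      then show ?thesis using True by (simp add: phi_ge1)
    next
      case False
      then have "S m \<le> S (Suc n)" by (intro S_mono) simp
      then have "(S m - S (Suc n)) / l n \<le> 0"
        using lpos[rule_format, of n] by (simp add: divide_nonpos_pos)
      then show ?thesis using False by (simp add: phi_le0)
    qed
    have g: "(\<lambda>j. a (j + m) i) \<longlonglongrightarrow> L i"
      using LIMSEQ_ignore_initial_segment[OF conv[rule_format, of i], of m] by simp
    from telescope_sums'[OF g]
    have "(\<lambda>j. (\<lambda>n. if m \<le> n then a n i - a (Suc n) i else 0) (j + m)) sums (a m i - L i)" by simp
    then have "(\<lambda>n. if m \<le> n then a n i - a (Suc n) i else 0) sums (a m i - L i)"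
      by (subst (asm) sums_zero_iff_shift) auto
    then show "c (S m) i = a m i" unfolding c_def ph by (simp add: sums_iff)
  qed
  show ?thesis using sc c0 cS by (auto simp: S_def)
qed



definition ep :: "nat \<Rightarrow> real" where "ep m = (1/2)^(m*m+m)"

lemma ep_pos: "ep m > 0" by (simp add: ep_def)

lemma ep_mono: "m \<le> n \<Longrightarrow> ep n \<le> ep m"
  unfolding ep_def by (intro power_decreasing add_mono mult_le_mono) auto

lemma ep_le: "ep m \<le> (1/2)^m"
  unfolding ep_def by (intro power_decreasing) auto

lemma ep_lim: "ep \<longlonglongrightarrow> 0"
proof (rule tendsto_sandwich[of "\<lambda>_. 0" _ _ "\<lambda>m. (1/2::real)^m"])
  show "\<forall>\<^sub>F n in sequentially. 0 \<le> ep n" using ep_pos by (simp add: less_imp_le)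
  show "\<forall>\<^sub>F n in sequentially. ep n \<le> (1/2)^n" using ep_le by simp
  show "(\<lambda>m. (1/2::real)^m) \<longlonglongrightarrow> 0" by (rule LIMSEQ_realpow_zero) auto
qed simp

lemma ep_eq: "((1/2::real)^m)^m * (1/2)^m = ep m"
  by (simp add: ep_def power_add power_mult[symmetric])

lemma conv_ep:
  assumes "\<forall>\<^sub>F m in sequentially. \<bar>X m - y\<bar> \<le> ep m"
  shows "X \<longlonglongrightarrow> y"
proof (rule tendsto_sandwich[of "\<lambda>m. y - ep m" _ _ "\<lambda>m. y + ep m"])
  show "\<forall>\<^sub>F n in sequentially. y - ep n \<le> X n" using assms by eventually_elim auto
  show "\<forall>\<^sub>F n in sequentially. X n \<le> y + ep n" using assms by eventually_elim auto
  show "(\<lambda>m. y - ep m) \<longlonglongrightarrow> y" using tendsto_diff[OF tendsto_const ep_lim, of y] by simp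
  show "(\<lambda>m. y + ep m) \<longlonglongrightarrow> y" using tendsto_add[OF tendsto_const ep_lim, of y] by simp
qed

lemma tail_props:
  fixes l :: "nat \<Rightarrow> real"
  assumes lpos: "\<forall>m. 0 < l m" and lsum: "summable l"
    and S_def: "\<And>m. S m = (\<Sum>j. l (j + m))"
  shows "S m = l m + S (Suc m)" and "S m > 0" and "S \<longlonglongrightarrow> 0"
    and "m \<le> n \<Longrightarrow> S n \<le> S m"
proof -
  have sm: "summable (\<lambda>j. l (j + m))" for m using lsum by (rule summable_ignore_initial_segment)
  show S_rec: "S m = l m + S (Suc m)" for m
    using suminf_split_head[OF sm[of m]] by (simp add: S_def)
  show "S m > 0" unfolding S_def using sm lpos by (intro suminf_pos) auto
  have "S m = suminf l - (\<Sum>i<m. l i)" for m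
    using suminf_split_initial_segment[OF lsum, of m] by (simp add: S_def)
  then have Seq: "S = (\<lambda>m. suminf l - (\<Sum>i<m. l i))" by (rule ext)
  moreover have "(\<lambda>m. suminf l - (\<Sum>i<m. l i)) \<longlonglongrightarrow> suminf l - suminf l"
    by (intro tendsto_diff tendsto_const summable_LIMSEQ lsum)
  ultimately show "S \<longlonglongrightarrow> 0" by (simp only:) simp
  show "m \<le> n \<Longrightarrow> S n \<le> S m"
  proof (induction n rule: dec_induct)
    case (step n)
    then show ?case using S_rec[of n] lpos[rule_format, of n] by linarith
  qed simp
qed

lemma smooth_cont0:
  assumes "smooth_real F" shows "isCont F t"
proof -
  from assms obtain D where "D 0 = F" "\<forall>n t. (D n has_real_derivative D (Suc n) t) (at t)"
    unfolding smooth_real_def by blast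
  then show ?thesis using DERIV_isCont by metis
qed

lemma coord_tendsto:
  fixes q :: "nat \<Rightarrow> nat \<Rightarrow> real"
  shows "(q \<longlonglongrightarrow> p) \<Longrightarrow> (\<lambda>k. q k i) \<longlonglongrightarrow> p i"
proof -
  assume q: "q \<longlonglongrightarrow> p"
  have "continuous_on UNIV (\<lambda>x::nat\<Rightarrow>real. x i)" by simp
  then have "isCont (\<lambda>x::nat\<Rightarrow>real. x i) p"
    using continuous_on_eq_continuous_at[OF open_UNIV] by blast
  from isCont_tendsto_compose[OF this q] show ?thesis .
qed

lemma slice_cont:
  fixes f :: "(nat \<Rightarrow> real) \<Rightarrow> real"
  assumes f: "f \<in> Cinf_RN" and q: "q \<longlonglongrightarrow> p" and agree: "\<forall>k i. i \<ge> n \<longrightarrow> q k i = p i"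
  shows "(\<lambda>k. f (q k)) \<longlonglongrightarrow> f p"
proof (rule ccontr)
  assume "\<not> ?thesis"
  then obtain e where e: "e > 0" "\<not> eventually (\<lambda>k. dist (f (q k)) (f p) < e) sequentially"
    unfolding tendsto_iff by blast
  then have fr: "frequently (\<lambda>k. \<not> dist (f (q k)) (f p) < e) sequentially"
    by (simp add: frequently_def)
  have "\<exists>k. \<not> dist (f (q k)) (f p) < e \<and> (\<forall>i\<in>{..<n}. \<bar>q k i - p i\<bar> < ep m / 2)" for m
  proof -
    have "\<forall>i\<in>{..<n}. eventually (\<lambda>k. \<bar>q k i - p i\<bar> < ep m / 2) sequentially"
    proof
      fix i
      have "(\<lambda>k. q k i) \<longlonglongrightarrow> p i" by (rule coord_tendsto[OF q])
      then have "eventually (\<lambda>k. dist (q k i) (p i) < ep m / 2) sequentially"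
        using ep_pos[of m] unfolding tendsto_iff by (metis half_gt_zero)
      then show "eventually (\<lambda>k. \<bar>q k i - p i\<bar> < ep m / 2) sequentially"
        by (simp add: dist_real_def)
    qed
    then have "eventually (\<lambda>k. \<forall>i\<in>{..<n}. \<bar>q k i - p i\<bar> < ep m / 2) sequentially"
      by (intro eventually_ball_finite) auto
    from frequently_ex[OF frequently_eventually_frequently[OF fr this]] show ?thesis .
  qed
  then obtain K where K: "\<forall>m. \<not> dist (f (q (K m))) (f p) < e \<and> (\<forall>i\<in>{..<n}. \<bar>q (K m) i - p i\<bar> < ep m / 2)"
    by metis
  define a where "a m = q (K m)" for m
  define l where "l m = (1/2::real)^m" for m
  have aclose: "\<bar>a m i - p i\<bar> \<le> ep m / 2" for m i
  proof (cases "i < n")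
    case True then show ?thesis using K by (auto simp: a_def less_imp_le)
  next
    case False then show ?thesis using agree ep_pos[of m] by (simp add: a_def less_imp_le)
  qed
  have lpos: "\<forall>m. 0 < l m" and l1: "\<forall>m. l m \<le> 1"
    by (auto simp: l_def power_le_one)
  have lsum: "summable l" unfolding l_def by (rule summable_geometric) simp
  have conv: "\<forall>i. (\<lambda>m. a m i) \<longlonglongrightarrow> p i"
  proof
    fix i
    have "\<bar>a m i - p i\<bar> \<le> ep m" for m using aclose[of m i] ep_pos[of m] by linarith
    then show "(\<lambda>m. a m i) \<longlonglongrightarrow> p i"
      by (intro conv_ep always_eventually) auto
  qed
  have fast: "\<forall>i. \<exists>N. \<forall>m\<ge>N. \<bar>a m i - a (Suc m) i\<bar> \<le> l m ^ m * (1/2)^m"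
  proof (intro allI exI[of _ 0] impI)
    fix i m :: nat
    have "\<bar>a m i - a (Suc m) i\<bar> \<le> ep m / 2 + ep (Suc m) / 2"
      using aclose[of m i] aclose[of "Suc m" i] by linarith
    also have "\<dots> \<le> ep m" using ep_mono[of m "Suc m"] by simp
    also have "\<dots> = l m ^ m * (1/2)^m" by (simp add: l_def ep_eq)
    finally show "\<bar>a m i - a (Suc m) i\<bar> \<le> l m ^ m * (1/2)^m" .
  qed
  obtain c where c: "structure_curve c" "c 0 = p" "\<forall>m. c (\<Sum>j. l (j + m)) = a m"
    using curve_exists[OF lpos l1 lsum conv fast] by blast
  define S where "S m = (\<Sum>j. l (j + m))" for m
  have S0: "S \<longlonglongrightarrow> 0" using tail_props(3)[OF lpos lsum S_def] .
  have "smooth_real (f \<circ> c)" using f c(1) by (simp add: Cinf_RN_def)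
  then have "isCont (f \<circ> c) 0" by (rule smooth_cont0)
  from isCont_tendsto_compose[OF this S0]
  have "(\<lambda>m. f (a m)) \<longlonglongrightarrow> f p" using c by (simp add: S_def)
  then have "eventually (\<lambda>m. dist (f (a m)) (f p) < e) sequentially"
    using e(1) unfolding tendsto_iff by blast
  then obtain N where "\<forall>m\<ge>N. dist (f (a m)) (f p) < e" unfolding eventually_sequentially by blast
  then have "dist (f (a N)) (f p) < e" by simp
  with K show False unfolding a_def by blast
qed



lemma loc_cyl:
  fixes f :: "(nat \<Rightarrow> real) \<Rightarrow> real" and x :: "nat \<Rightarrow> real"
  assumes f: "f \<in> Cinf_RN"
  shows "\<exists>n. \<forall>y z. (\<forall>i<n. \<bar>y i - x i\<bar> < ep (2*n+1) / 2) \<and> (\<forall>i<n. \<bar>z i - x i\<bar> < ep (2*n+1) / 2)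
            \<and> (\<forall>i<n. y i = z i) \<longrightarrow> f y = f z"
proof (rule ccontr)
  define r where "r n = ep (2*n+1) / 2" for n
  assume "\<not> ?thesis"
  then have "\<forall>n. \<exists>y z. (\<forall>i<n. \<bar>y i - x i\<bar> < r n) \<and> (\<forall>i<n. \<bar>z i - x i\<bar> < r n)
            \<and> (\<forall>i<n. y i = z i) \<and> f y \<noteq> f z" by (auto simp: r_def)
  then obtain Y Z where YZ: "\<forall>n. (\<forall>i<n. \<bar>Y n i - x i\<bar> < r n) \<and> (\<forall>i<n. \<bar>Z n i - x i\<bar> < r n)
            \<and> (\<forall>i<n. Y n i = Z n i) \<and> f (Y n) \<noteq> f (Z n)" by metis
  define d where "d n = \<bar>f (Y n) - f (Z n)\<bar>" for n
  have dpos: "d n > 0" for n using YZ by (simp add: d_def)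
  define a where "a m = (if even m then Y (m div 2) else Z (m div 2))" for m
  define l where "l m = (if even m then min ((1/2)^m) (d (m div 2) / (real (m div 2) + 1)) else (1/2::real)^m)" for m
  have lpos: "\<forall>m. 0 < l m" using dpos by (simp add: l_def)
  have lle: "l m \<le> (1/2)^m" for m by (simp add: l_def)
  have "l m \<le> 1" for m using lle[of m] power_le_one[of "1/2::real" m] by linarith
  then have l1: "\<forall>m. l m \<le> 1" by blast
  have lsum: "summable l"
    by (rule summable_comparison_test'[OF summable_geometric[of "1/2::real"], of 0]) (use lle lpos in \<open>auto simp: less_imp_le\<close>)
  have rmono: "r (Suc n) \<le> r n" for n unfolding r_def using ep_mono[of "2*n+1" "2*Suc n+1"] by simp
  have close: "\<bar>a m i - x i\<bar> \<le> ep m" if "m \<ge> 2*i+2" for m i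
  proof -
    have i: "i < m div 2" using that by auto
    show ?thesis
    proof (cases "even m")
      case True
      then have "\<bar>a m i - x i\<bar> < r (m div 2)" using YZ i by (simp add: a_def)
      also have "r (m div 2) \<le> ep m" unfolding r_def using ep_mono[of m "2*(m div 2)+1"] ep_pos[of "2*(m div 2)+1"] True by simp
      finally show ?thesis by simp
    next
      case False
      then have "\<bar>a m i - x i\<bar> < r (m div 2)" using YZ i by (simp add: a_def)
      also have "r (m div 2) \<le> ep m" unfolding r_def using False ep_pos[of m]
        by (simp add: odd_two_times_div_two_succ)
      finally show ?thesis by simp
    qed
  qed
  have conv: "\<forall>i. (\<lambda>m. a m i) \<longlonglongrightarrow> x i"
  proof
    fix i show "(\<lambda>m. a m i) \<longlonglongrightarrow> x i"
      by (rule conv_ep) (use close in \<open>auto simp: eventually_sequentially\<close>)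
  qed
  have fast: "\<forall>i. \<exists>N. \<forall>m\<ge>N. \<bar>a m i - a (Suc m) i\<bar> \<le> l m ^ m * (1/2)^m"
  proof (intro allI exI[of _ "2*i+2" for i] impI)
    fix i m :: nat assume m: "m \<ge> 2*i+2"
    have i: "i < m div 2" using m by auto
    show "\<bar>a m i - a (Suc m) i\<bar> \<le> l m ^ m * (1/2)^m"
    proof (cases "even m")
      case True
      then have "a m i = a (Suc m) i" using YZ i by (simp add: a_def)
      then show ?thesis using lpos by (simp add: less_imp_le)
    next
      case False
      then have m2: "m = 2 * (m div 2) + 1" by (simp add: odd_two_times_div_two_succ)
      have "Suc m div 2 = Suc (m div 2)" using False by (simp add: odd_two_times_div_two_succ)
      then have "a (Suc m) = Y (Suc (m div 2))" using False by (simp add: a_def)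
      moreover have "a m = Z (m div 2)" using False by (simp add: a_def)
      ultimately have "\<bar>a m i - a (Suc m) i\<bar> \<le> \<bar>Z (m div 2) i - x i\<bar> + \<bar>Y (Suc (m div 2)) i - x i\<bar>" by simp
      also have "\<dots> \<le> r (m div 2) + r (Suc (m div 2))" using YZ i by (smt (verit) less_SucI)
      also have "\<dots> \<le> 2 * r (m div 2)" using rmono[of "m div 2"] by simp
      also have "\<dots> = ep (2*(m div 2)+1)" by (simp add: r_def)
      also have "\<dots> = ep m" using m2[symmetric] by simp
      also have "\<dots> = l m ^ m * (1/2)^m" using False by (simp add: l_def ep_eq)
      finally show ?thesis .
    qed
  qed
  obtain c where c: "structure_curve c" "c 0 = x" "\<forall>m. c (\<Sum>j. l (j + m)) = a m"
    using curve_exists[OF lpos l1 lsum conv fast] by blast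
  define S where "S m = (\<Sum>j. l (j + m))" for m
  have S_rec: "S m = l m + S (Suc m)" and S_pos: "S m > 0" and S0: "S \<longlonglongrightarrow> 0"
    and S_mono: "m \<le> n \<Longrightarrow> S n \<le> S m" for m n
    using tail_props[OF lpos lsum S_def] by blast+
  have cS: "c (S m) = a m" for m using c(3) by (simp add: S_def)
  have "smooth_real (f \<circ> c)" using f c(1) by (simp add: Cinf_RN_def)
  then obtain D where D: "D 0 = f \<circ> c" "\<forall>n t. (D n has_real_derivative D (Suc n) t) (at t)"
    unfolding smooth_real_def by blast
  have "\<exists>\<xi>. S (Suc (2*n)) < \<xi> \<and> \<xi> < S (2*n) \<and> real n + 1 \<le> \<bar>D 1 \<xi>\<bar>" for n
  proof -
    have lt: "S (Suc (2*n)) < S (2*n)" using S_rec[of "2*n"] lpos by simp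
    obtain \<xi> where xi: "S (Suc (2*n)) < \<xi>" "\<xi> < S (2*n)"
      "D 0 (S (2*n)) - D 0 (S (Suc (2*n))) = (S (2*n) - S (Suc (2*n))) * D 1 \<xi>"
      using MVT2[OF lt, of "D 0" "D 1"] D(2) by auto
    have "D 0 (S (2*n)) = f (Y n)" using cS D(1) by (simp add: a_def)
    moreover have "D 0 (S (Suc (2*n))) = f (Z n)" using cS D(1) by (simp add: a_def)
    moreover have "S (2*n) - S (Suc (2*n)) = l (2*n)" using S_rec[of "2*n"] by simp
    ultimately have eq: "d n = l (2*n) * \<bar>D 1 \<xi>\<bar>" using xi(3) lpos[rule_format, of "2*n"] by (simp add: d_def abs_mult)
    have ll: "l (2*n) \<le> d n / (real n + 1)" by (simp add: l_def)
    have "d n = l (2*n) * \<bar>D 1 \<xi>\<bar>" by (rule eq)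
    also have "\<dots> \<le> d n / (real n + 1) * \<bar>D 1 \<xi>\<bar>" by (rule mult_right_mono[OF ll abs_ge_zero])
    finally have "d n \<le> d n / (real n + 1) * \<bar>D 1 \<xi>\<bar>" .
    then have "d n * (real n + 1) \<le> d n * \<bar>D 1 \<xi>\<bar>" using dpos[of n]
      by (simp add: field_simps)
    then have "real n + 1 \<le> \<bar>D 1 \<xi>\<bar>" using mult_le_cancel_left_pos[OF dpos[of n]] by blast
    then show ?thesis using xi by blast
  qed
  then obtain X where X: "\<forall>n. S (Suc (2*n)) < X n \<and> X n < S (2*n) \<and> real n + 1 \<le> \<bar>D 1 (X n)\<bar>" by metis
  have X0: "X \<longlonglongrightarrow> 0"
  proof (rule tendsto_sandwich[of "\<lambda>_. 0" _ _ S])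
    have "0 \<le> X n" for n using X S_pos[of "Suc (2*n)"] by (meson less_imp_le order.strict_trans)
    then show "\<forall>\<^sub>F n in sequentially. 0 \<le> X n" by simp
    have "X n \<le> S n" for n
    proof -
      have "S (2*n) \<le> S n" by (rule S_mono) simp
      moreover have "X n < S (2*n)" using X by blast
      ultimately show ?thesis by linarith
    qed
    then show "\<forall>\<^sub>F n in sequentially. X n \<le> S n" by simp
  qed (use S0 in auto)
  have "isCont (D 1) 0" using D(2) DERIV_isCont by blast
  from isCont_tendsto_compose[OF this X0]
  have "eventually (\<lambda>n. dist (D 1 (X n)) (D 1 0) < 1) sequentially"
    unfolding tendsto_iff by simp
  then obtain N where N: "\<forall>n\<ge>N. dist (D 1 (X n)) (D 1 0) < 1" unfolding eventually_sequentially by blast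
  define n where "n = max N (nat \<lceil>\<bar>D 1 0\<bar>\<rceil>)"
  have "dist (D 1 (X n)) (D 1 0) < 1" using N by (simp add: n_def)
  moreover have "\<bar>D 1 0\<bar> \<le> real n" unfolding n_def
    by (metis max.cobounded2 of_nat_le_iff order_trans real_nat_ceiling_ge)
  moreover have "real n + 1 \<le> \<bar>D 1 (X n)\<bar>" using X by blast
  ultimately show False by (simp add: dist_real_def)
qed



theorem proposition6:
  fixes f :: "(nat \<Rightarrow> real) \<Rightarrow> real" and x :: "nat \<Rightarrow> real"
  assumes "f \<in> Cinf_RN"
  shows "\<exists>U N0 (g :: (nat \<Rightarrow> real) \<Rightarrow> real). open U \<and> x \<in> U \<and> finite N0 \<and>
           continuous_on (cyl_proj N0 ` U) g \<and>
           (\<forall>y\<in>U. f y = g (cyl_proj N0 y))"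
proof -
  obtain n where n: "\<forall>y z. (\<forall>i<n. \<bar>y i - x i\<bar> < ep (2*n+1) / 2) \<and> (\<forall>i<n. \<bar>z i - x i\<bar> < ep (2*n+1) / 2)
            \<and> (\<forall>i<n. y i = z i) \<longrightarrow> f y = f z"
    using loc_cyl[OF assms] by blast
  define r where "r = ep (2*n+1) / 2"
  have rpos: "r > 0" using ep_pos by (simp add: r_def)
  define U where "U = {y::nat\<Rightarrow>real. \<forall>i\<in>{..<n}. y i \<in> ball (x i) r}"
  have Uiff: "y \<in> U \<longleftrightarrow> (\<forall>i<n. \<bar>y i - x i\<bar> < r)" for y
    by (auto simp: U_def dist_real_def abs_minus_commute)
  have "open U" unfolding U_def
    using product_topology_basis'[where I="{..<n}" and U="\<lambda>i. ball (x i) r" and x="\<lambda>i. i"] by simp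
  moreover have "x \<in> U" using rpos by (simp add: Uiff)
  define E where "E w = (\<lambda>i. if i < n then w i else x i)" for w :: "nat \<Rightarrow> real"
  define g where "g w = f (E w)" for w
  have contE: "continuous_on UNIV E"
    unfolding E_def
  proof (intro continuous_on_coordinatewise_then_product)
    fix i show "continuous_on UNIV (\<lambda>w::nat\<Rightarrow>real. if i < n then w i else x i)"
      by (cases "i < n") auto
  qed
  define A where "A = {p::nat\<Rightarrow>real. \<forall>i\<ge>n. p i = x i}"
  have contA: "continuous_on A f"
  proof (rule continuous_on_sequentiallyI)
    fix u a assume u: "\<forall>k. u k \<in> A" "a \<in> A" "u \<longlonglongrightarrow> a"
    show "(\<lambda>k. f (u k)) \<longlonglongrightarrow> f a"
      by (rule slice_cont[OF assms u(3), of n]) (use u(1,2) in \<open>auto simp: A_def\<close>)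
  qed
  have "E ` UNIV \<subseteq> A" by (auto simp: E_def A_def)
  then have "continuous_on UNIV g"
    unfolding g_def using continuous_on_compose[OF contE continuous_on_subset[OF contA]]
    by (simp add: o_def)
  then have "continuous_on (cyl_proj {..<n} ` U) g" by (rule continuous_on_subset) simp
  moreover have "\<forall>y\<in>U. f y = g (cyl_proj {..<n} y)"
  proof
    fix y assume y: "y \<in> U"
    have e: "E (cyl_proj {..<n} y) = (\<lambda>i. if i < n then y i else x i)"
      by (simp add: E_def cyl_proj_def fun_eq_iff)
    have "f y = f (\<lambda>i. if i < n then y i else x i)"
      using n[rule_format, of y "\<lambda>i. if i < n then y i else x i"] y by (simp add: Uiff r_def)
    then show "f y = g (cyl_proj {..<n} y)" by (simp add: g_def e)
  qed
  ultimately show ?thesis using \<open>open U\<close> \<open>x \<in> U\<close> by blast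
qed

end
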